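(* Let $(D,\sqsubseteq)$ be a dcpo with its Scott topology, let $B\subseteq D$, and let $A\in\mathbf{\Delta}^0_2(D)$. Then every $\sqsubseteq$-increasing $B$-tree $f:T\to B$ that is $(A,\varepsilon)$-alternating for some $\varepsilon\in\{0,1\}$ is well-founded.
   Context: Dcpo: poset where every nonempty directed subset has a supremum; Scott topology: open sets are upsets $O$ such that every directed set with supremum in $O$ meets $O$. $\mathbf{\Sigma}^0_2(D)$: countable unions of differences $U\setminus V$ of Scott open sets; $\mathbf{\Pi}^0_2(D)$: complements; $\mathbf{\Delta}^0_2(D)=\mathbf{\Sigma}^0_2(D)\cap\mathbf{\Pi}^0_2(D)$. A tree is a nonempty set of finite sequences (over some set) closed under prefixes; it is well-founded if it has no infinite branch (no infinite sequence all of whose finite prefixes lie in $T$). A $B$-tree is a map $f:T\to B$ with $T$ a tree. It is $(A,\varepsilon)$-alternating if ($f(\mathit{nil})\in A$ iff $\varepsilon=1$) and for all $\sigma,\sigma a\in T$ (where $\sigma a$ is $\sigma$ extended by one element $a$), $f(\sigma a)\in A\iff f(\sigma)\notin A$. It is $\sqsubseteq$-increasing if $f(\sigma)\sqsubseteq f(\sigma a)$ whenever $\sigma,\sigma a\in T$. *)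

theory Defs
  imports Main
begin

text \<open>Posets are modelled by a type of class order; the dcpo D is the whole type.\<close>

definition directed :: "'a::order set \<Rightarrow> bool" where
  "directed S \<longleftrightarrow> S \<noteq> {} \<and> (\<forall>x\<in>S. \<forall>y\<in>S. \<exists>z\<in>S. x \<le> z \<and> y \<le> z)"

definition is_sup :: "'a::order set \<Rightarrow> 'a \<Rightarrow> bool" where
  "is_sup S s \<longleftrightarrow> (\<forall>x\<in>S. x \<le> s) \<and> (\<forall>u. (\<forall>x\<in>S. x \<le> u) \<longrightarrow> s \<le> u)"

definition dcpo :: "'a::order itself \<Rightarrow> bool" where
  "dcpo _ \<longleftrightarrow> (\<forall>S::'a set. directed S \<longrightarrow> (\<exists>s. is_sup S s))"

definition scott_open :: "'a::order set \<Rightarrow> bool" where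
  "scott_open U \<longleftrightarrow> (\<forall>x y. x \<in> U \<longrightarrow> x \<le> y \<longrightarrow> y \<in> U) \<and>
     (\<forall>S s. directed S \<longrightarrow> is_sup S s \<longrightarrow> s \<in> U \<longrightarrow> S \<inter> U \<noteq> {})"

definition Sigma02 :: "'a::order set set" where
  "Sigma02 = {A. \<exists>U V :: nat \<Rightarrow> 'a set. (\<forall>n. scott_open (U n) \<and> scott_open (V n)) \<and>
                   A = (\<Union>n. U n - V n)}"

definition Pi02 :: "'a::order set set" where
  "Pi02 = {A. - A \<in> Sigma02}"

definition Delta02 :: "'a::order set set" where
  "Delta02 = Sigma02 \<inter> Pi02"

text \<open>Trees over a set of labels (type 'b); \<sigma> a is \<sigma> @ [a].\<close>

definition is_tree :: "'b list set \<Rightarrow> bool" where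
  "is_tree T \<longleftrightarrow> T \<noteq> {} \<and> (\<forall>\<sigma> \<tau>. \<sigma> @ \<tau> \<in> T \<longrightarrow> \<sigma> \<in> T)"

definition well_founded_tree :: "'b list set \<Rightarrow> bool" where
  "well_founded_tree T \<longleftrightarrow> \<not> (\<exists>g :: nat \<Rightarrow> 'b. \<forall>n. map g [0..<n] \<in> T)"

definition B_tree :: "'a set \<Rightarrow> 'b list set \<Rightarrow> ('b list \<Rightarrow> 'a) \<Rightarrow> bool" where
  "B_tree B T f \<longleftrightarrow> is_tree T \<and> f ` T \<subseteq> B"

definition alternating :: "'a set \<Rightarrow> nat \<Rightarrow> 'b list set \<Rightarrow> ('b list \<Rightarrow> 'a) \<Rightarrow> bool" where
  "alternating A \<epsilon> T f \<longleftrightarrow> (f [] \<in> A \<longleftrightarrow> \<epsilon> = 1) \<and>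
     (\<forall>\<sigma> a. \<sigma> \<in> T \<longrightarrow> \<sigma> @ [a] \<in> T \<longrightarrow> (f (\<sigma> @ [a]) \<in> A \<longleftrightarrow> f \<sigma> \<notin> A))"

definition increasing_tree :: "'b list set \<Rightarrow> ('b list \<Rightarrow> 'a::order) \<Rightarrow> bool" where
  "increasing_tree T f \<longleftrightarrow> (\<forall>\<sigma> a. \<sigma> \<in> T \<longrightarrow> \<sigma> @ [a] \<in> T \<longrightarrow> f \<sigma> \<le> f (\<sigma> @ [a]))"

end

theory Submission
  imports Defs
begin

lemma sigma_eventually:
  fixes x :: "nat \<Rightarrow> 'a::order" and C :: "'a set"
  assumes C: "C \<in> Sigma02" and inc: "\<And>n. x n \<le> x (Suc n)"
    and sup: "is_sup (range x) s" and sC: "s \<in> C"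
  shows "\<exists>N. \<forall>m\<ge>N. x m \<in> C"
proof -
  from C have "\<exists>U V :: nat \<Rightarrow> 'a set. (\<forall>n. scott_open (U n) \<and> scott_open (V n)) \<and> C = (\<Union>n. U n - V n)"
    unfolding Sigma02_def by (rule CollectD)
  then obtain U where "\<exists>V :: nat \<Rightarrow> 'a set. (\<forall>n. scott_open (U n) \<and> scott_open (V n)) \<and> C = (\<Union>n. U n - V n)" ..
  then obtain V where UVC: "(\<forall>n. scott_open (U n) \<and> scott_open (V n)) \<and> C = (\<Union>n. U n - V n)" ..
  from UVC have UV: "\<forall>n. scott_open (U n) \<and> scott_open (V n)" by (rule conjunct1)
  from UVC have Ceq: "C = (\<Union>n. U n - V n)" by (rule conjunct2)
  from sC Ceq obtain k where sU: "s \<in> U k" and sV: "s \<notin> V k" by blast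
  have mono: "\<And>i j. i \<le> j \<Longrightarrow> x i \<le> x j" by (rule lift_Suc_mono_le[of x, OF inc])
  have dir: "directed (range x)"
    unfolding directed_def
  proof (intro conjI ballI)
    show "range x \<noteq> {}" by simp
  next
    fix a b assume "a \<in> range x" "b \<in> range x"
    then obtain i j where "a = x i" "b = x j" by blast
    then show "\<exists>z\<in>range x. a \<le> z \<and> b \<le> z"
      using mono[of i "max i j"] mono[of j "max i j"] by auto
  qed
  from UV have oU: "scott_open (U k)" and oV: "scott_open (V k)" by auto
  from oU have "range x \<inter> U k \<noteq> {}" using dir sup sU unfolding scott_open_def by blast
  then obtain N where xN: "x N \<in> U k" by blast
  have "x m \<in> C" if "m \<ge> N" for m
  proof -
    have "x m \<in> U k" using oU xN mono[OF that] unfolding scott_open_def by simp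
    moreover have le: "x m \<le> s" using sup unfolding is_sup_def by auto
    have upV: "\<And>a b. a \<in> V k \<Longrightarrow> a \<le> b \<Longrightarrow> b \<in> V k" using oV unfolding scott_open_def by blast
    have "x m \<notin> V k" using upV sV le by blast
    ultimately show ?thesis using Ceq by blast
  qed
  thus ?thesis by blast
qed

theorem proposition4p6:
  fixes B A :: "'a::order set" and T :: "'b list set" and f :: "'b list \<Rightarrow> 'a" and \<epsilon> :: nat
  assumes "dcpo TYPE('a)"
    and "A \<in> Delta02"
    and "B_tree B T f"
    and "increasing_tree T f"
    and "\<epsilon> \<in> {0, 1}"
    and "alternating A \<epsilon> T f"
  shows "well_founded_tree T"
  unfolding well_founded_tree_def
proof
  assume "\<exists>g :: nat \<Rightarrow> 'b. \<forall>n. map g [0..<n] \<in> T"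
  then obtain g :: "nat \<Rightarrow> 'b" where g: "\<And>n. map g [0..<n] \<in> T" by blast
  define x where "x n = f (map g [0..<n])" for n
  have step: "map g [0..<Suc n] = map g [0..<n] @ [g n]" for n by simp
  have inc: "x n \<le> x (Suc n)" for n
  proof -
    have "f (map g [0..<n]) \<le> f (map g [0..<n] @ [g n])"
      using assms(4) g[of n] g[of "Suc n"] unfolding increasing_tree_def step by simp
    thus ?thesis unfolding x_def step .
  qed
  have alt: "x (Suc n) \<in> A \<longleftrightarrow> x n \<notin> A" for n
  proof -
    have "f (map g [0..<n] @ [g n]) \<in> A \<longleftrightarrow> f (map g [0..<n]) \<notin> A"
      using assms(6) g[of n] g[of "Suc n"] unfolding alternating_def step by simp
    thus ?thesis unfolding x_def step .
  qed
  have mono: "\<And>i j. i \<le> j \<Longrightarrow> x i \<le> x j" by (rule lift_Suc_mono_le[of x, OF inc])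
  have dir: "directed (range x)"
    unfolding directed_def
  proof (intro conjI ballI)
    show "range x \<noteq> {}" by simp
  next
    fix a b assume "a \<in> range x" "b \<in> range x"
    then obtain i j where "a = x i" "b = x j" by blast
    then show "\<exists>z\<in>range x. a \<le> z \<and> b \<le> z"
      using mono[of i "max i j"] mono[of j "max i j"] by auto
  qed
  then obtain s where sup: "is_sup (range x) s" using assms(1) unfolding dcpo_def by blast
  have AS: "A \<in> Sigma02" and AP: "- A \<in> Sigma02" using assms(2) unfolding Delta02_def Pi02_def by auto
  show False
  proof (cases "s \<in> A")
    case True
    from sigma_eventually[OF AS inc sup True] obtain N where "\<forall>m\<ge>N. x m \<in> A" by blast
    then have "x N \<in> A" "x (Suc N) \<in> A" by auto
    then show False using alt[of N] by simp
  next
    case False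
    hence "s \<in> - A" by simp
    from sigma_eventually[OF AP inc sup this] obtain N where "\<forall>m\<ge>N. x m \<in> - A" by blast
    then have "x N \<notin> A" "x (Suc N) \<notin> A" by auto
    then show False using alt[of N] by simp
  qed
qed

end
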